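(* For the English Walrasian mechanism with valuation space $\mathcal{V}=\textsc{Gs}$ and bidding space $\mathcal{B}=\textsc{Gs}$, the Price of Stability is $1$; that is, for every profile $\mathbf{v}\in\textsc{Gs}^n$ of true valuations there exists a pure Nash equilibrium $\mathbf{b}$ with $\sum_i v_i(\mathbf{x}_i(\mathbf{b}))=\max\{\sum_i v_i(\mathbf{y}_i):(\mathbf{y}_i)_i \text{ a partition of the items}\}$.
   Context: There are $m$ items and $n$ agents. A valuation is $v:\{0,1\}^m\to\mathbb{R}_+$ with $v(\mathbf{0})=0$, monotone; extended to $\mathbb{Z}^m_+$ by $v(\mathbf{x})=v(\min(\mathbf{x},\mathbf{1}))$. Demand at prices $\mathbf{p}$: $D_v(\mathbf{p})=\arg\max_{\mathbf{x}\in\{0,1\}^m}[v(\mathbf{x})-\mathbf{p}\cdot\mathbf{x}]$. $v\in\textsc{Gs}$ (gross substitutes) if for all prices $\mathbf{p}\le\mathbf{q}$, $S=\{j:p_j=q_j\}$, and $\mathbf{x}\in D_v(\mathbf{p})$, there is $\mathbf{y}\in D_v(\mathbf{q})$ with $y_j\ge x_j$ for all $j\in S$. For declared $\mathbf{b}=(b_1,\dots,b_n)$, $W^{\mathbf{b}}(\mathbf{x})=\max\{\sum_i b_i(\mathbf{x}_i):\sum_i\mathbf{x}_i\le\mathbf{x},\mathbf{x}_i\in\{0,1\}^m\}$ for $\mathbf{x}\in\mathbb{Z}^m_+$, and $f(\mathbf{y}\mid\mathbf{x})=f(\mathbf{y}+\mathbf{x})-f(\mathbf{x})$. English Walrasian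 mechanism: agents report $b_i\in\mathcal{B}$; allocation is a partition maximizing $\sum_i b_i(\mathbf{x}_i)$; payment $\pi_i(\mathbf{b})=\sum_{j: x_{ij}(\mathbf{b})=1}W^{\mathbf{b}}(\mathbf{1}_j\mid\mathbf{1})$. Utility $u_i(v_i;\mathbf{b})=v_i(\mathbf{x}_i(\mathbf{b}))-\pi_i(\mathbf{b})$. Pure Nash equilibrium: no agent can increase his utility by unilaterally changing his report within $\mathcal{B}$. The Price of Stability is $\max_{\mathbf{v}}\min_{\mathbf{b}\in\textsc{Nash}(\mathbf{v})}\frac{\sum_i v_i(\mathbf{x}^*_i(\mathbf{v}))}{\sum_i v_i(\mathbf{x}_i(\mathbf{b}))}$ where $\mathbf{x}^*(\mathbf{v})$ is a welfare-maximizing partition (taken to be $1$ if no Nash equilibrium exists). *)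

theory Defs
  imports Complex_Main
begin

(* Items are 0..<m, agents are 0..<n. A bundle in {0,1}^m is a subset of {..<m};
   a valuation / bid is a function on bundles (values outside subsets of {..<m} are irrelevant). *)

type_synonym valuation = "nat set \<Rightarrow> real"
type_synonym profile = "nat \<Rightarrow> valuation"
type_synonym allocation = "nat \<Rightarrow> nat set"

definition is_valuation :: "nat \<Rightarrow> valuation \<Rightarrow> bool" where
  "is_valuation m v \<longleftrightarrow> v {} = 0 \<and> (\<forall>S. S \<subseteq> {..<m} \<longrightarrow> v S \<ge> 0)
     \<and> (\<forall>S T. S \<subseteq> T \<and> T \<subseteq> {..<m} \<longrightarrow> v S \<le> v T)"

definition demand :: "nat \<Rightarrow> valuation \<Rightarrow> (nat \<Rightarrow> real) \<Rightarrow> nat set set" where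
  "demand m v p = {X. X \<subseteq> {..<m} \<and>
      (\<forall>Y. Y \<subseteq> {..<m} \<longrightarrow> v Y - (\<Sum>j\<in>Y. p j) \<le> v X - (\<Sum>j\<in>X. p j))}"

definition gross_substitutes :: "nat \<Rightarrow> valuation \<Rightarrow> bool" where
  "gross_substitutes m v \<longleftrightarrow> is_valuation m v \<and>
     (\<forall>p q. (\<forall>j<m. p j \<le> q j) \<longrightarrow>
        (\<forall>X \<in> demand m v p. \<exists>Y \<in> demand m v q.
            \<forall>j<m. p j = q j \<and> j \<in> X \<longrightarrow> j \<in> Y))"

definition is_partition :: "nat \<Rightarrow> nat \<Rightarrow> allocation \<Rightarrow> bool" where
  "is_partition m n x \<longleftrightarrow> (\<forall>i<n. x i \<subseteq> {..<m})
     \<and> (\<forall>i<n. \<forall>k<n. i \<noteq> k \<longrightarrow> x i \<inter> x k = {})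
     \<and> (\<Union>i<n. x i) = {..<m}"

definition welfare :: "nat \<Rightarrow> profile \<Rightarrow> allocation \<Rightarrow> real" where
  "welfare n v x = (\<Sum>i<n. v i (x i))"

definition opt_welfare :: "nat \<Rightarrow> nat \<Rightarrow> profile \<Rightarrow> real" where
  "opt_welfare m n v = Max {welfare n v y | y. is_partition m n y}"

definition optimal_allocation :: "nat \<Rightarrow> nat \<Rightarrow> profile \<Rightarrow> allocation \<Rightarrow> bool" where
  "optimal_allocation m n b x \<longleftrightarrow> is_partition m n x \<and>
     (\<forall>y. is_partition m n y \<longrightarrow> welfare n b y \<le> welfare n b x)"

(* W^b(x) for a multiplicity vector x \<in> Z_+^m (given as nat \<Rightarrow> nat, only j < m matters):
   maximum of \<Sum>_i b_i(x_i) over binary bundles x_i with \<Sum>_i x_i \<le> x. *)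
definition W :: "nat \<Rightarrow> nat \<Rightarrow> profile \<Rightarrow> (nat \<Rightarrow> nat) \<Rightarrow> real" where
  "W m n b x = Max {(\<Sum>i<n. b i (S i)) | S.
      (\<forall>i<n. S i \<subseteq> {..<m}) \<and> (\<forall>j<m. card {i. i < n \<and> j \<in> S i} \<le> x j)}"

definition ones :: "nat \<Rightarrow> nat" where "ones = (\<lambda>_. 1)"

definition ones_plus :: "nat \<Rightarrow> nat \<Rightarrow> nat" where
  "ones_plus j = (\<lambda>k. if k = j then 2 else 1)"

definition item_price :: "nat \<Rightarrow> nat \<Rightarrow> profile \<Rightarrow> nat \<Rightarrow> real" where
  "item_price m n b j = W m n b (ones_plus j) - W m n b ones"

definition payment :: "nat \<Rightarrow> nat \<Rightarrow> (profile \<Rightarrow> allocation) \<Rightarrow> profile \<Rightarrow> nat \<Rightarrow> real" where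
  "payment m n alloc b i = (\<Sum>j\<in>alloc b i. item_price m n b j)"

definition utility :: "nat \<Rightarrow> nat \<Rightarrow> (profile \<Rightarrow> allocation) \<Rightarrow> valuation \<Rightarrow> profile \<Rightarrow> nat \<Rightarrow> real" where
  "utility m n alloc vi b i = vi (alloc b i) - payment m n alloc b i"

definition is_nash_gs :: "nat \<Rightarrow> nat \<Rightarrow> (profile \<Rightarrow> allocation) \<Rightarrow> profile \<Rightarrow> profile \<Rightarrow> bool" where
  "is_nash_gs m n alloc v b \<longleftrightarrow> (\<forall>i<n. gross_substitutes m (b i)) \<and>
     (\<forall>i<n. \<forall>b'. gross_substitutes m b' \<longrightarrow>
        utility m n alloc (v i) (b(i := b')) i \<le> utility m n alloc (v i) b i)"

end

theory Submission
  imports Defs "HOL-Library.FuncSet"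
begin

lemma fin_img:
  fixes f :: "(nat \<Rightarrow> nat set) \<Rightarrow> real" and n m :: nat
  assumes fe: "\<And>S. f S = f (\<lambda>i. if i < n then S i else {})"
  shows "finite {f S | S. (\<forall>i<n. S i \<subseteq> {..<m}) \<and> P S}"
proof (rule finite_subset)
  let ?g = "\<lambda>(h::nat \<Rightarrow> nat set) i. if i < n then h i else {}"
  let ?A = "PiE {..<n} (\<lambda>_::nat. Pow {..<m})"
  show "{f S | S. (\<forall>i<n. S i \<subseteq> {..<m}) \<and> P S} \<subseteq> (\<lambda>h. f (?g h)) ` ?A"
  proof
    fix y assume "y \<in> {f S | S. (\<forall>i<n. S i \<subseteq> {..<m}) \<and> P S}"
    then obtain S where y: "y = f S" and S: "\<forall>i<n. S i \<subseteq> {..<m}" by blast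
    have r: "restrict S {..<n} \<in> ?A" using S by (simp add: PiE_iff)
    have "?g (restrict S {..<n}) = ?g S" by (simp add: fun_eq_iff)
    then have yy: "y = f (?g (restrict S {..<n}))" using y fe[of S] by simp
    show "y \<in> (\<lambda>h. f (?g h)) ` ?A" using r yy by blast
  qed
  show "finite ((\<lambda>h. f (?g h)) ` ?A)" by (intro finite_imageI finite_PiE) auto
qed

lemma W_fin:
  fixes b :: profile and n m :: nat and x :: "nat \<Rightarrow> nat"
  shows "finite {(\<Sum>i<n. b i (S i)) | S. (\<forall>i<n. S i \<subseteq> {..<m}) \<and> (\<forall>j<m. card {i. i < n \<and> j \<in> S i} \<le> x j)}"
  by (rule fin_img[where f="\<lambda>S. \<Sum>i<n. b i (S i)" and P = "\<lambda>S. \<forall>j<m. card {i. i < n \<and> j \<in> S i} \<le> x j"]) (rule sum.cong, auto)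

lemma W_ne:
  fixes b :: profile and n m :: nat and x :: "nat \<Rightarrow> nat"
  shows "{(\<Sum>i<n. b i (S i)) | S. (\<forall>i<n. S i \<subseteq> {..<m}) \<and> (\<forall>j<m. card {i. i < n \<and> j \<in> S i} \<le> x j)} \<noteq> {}"
proof -
  have "(\<Sum>i<n. b i ((\<lambda>_. {}) i)) \<in> {(\<Sum>i<n. b i (S i)) | S. (\<forall>i<n. S i \<subseteq> {..<m}) \<and> (\<forall>j<m. card {i. i < n \<and> j \<in> S i} \<le> x j)}"
    by (intro CollectI exI[of _ "\<lambda>_. {}"]) simp
  then show ?thesis by (rule ex_in_conv[THEN iffD1, OF exI])
qed

lemma W_ge:
  fixes b :: profile and n m :: nat and x :: "nat \<Rightarrow> nat"
  shows "(\<forall>i<n. S i \<subseteq> {..<m}) \<Longrightarrow> (\<forall>j<m. card {i. i < n \<and> j \<in> S i} \<le> x j) \<Longrightarrow> (\<Sum>i<n. b i (S i)) \<le> W m n b x"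
  unfolding W_def by (rule Max_ge[OF W_fin]) blast

lemma W_le:
  fixes b :: profile and n m :: nat and x :: "nat \<Rightarrow> nat"
  shows "(\<And>S. (\<forall>i<n. S i \<subseteq> {..<m}) \<Longrightarrow> (\<forall>j<m. card {i. i < n \<and> j \<in> S i} \<le> x j) \<Longrightarrow> (\<Sum>i<n. b i (S i)) \<le> c) \<Longrightarrow> W m n b x \<le> c"
  unfolding W_def by (rule Max.boundedI[OF W_fin W_ne]) auto

lemma price_nonneg: "0 \<le> item_price m n b j"
proof -
  have "W m n b ones \<le> W m n b (ones_plus j)"
  proof (rule W_le)
    fix S :: "nat \<Rightarrow> nat set"
    assume S: "\<forall>i<n. S i \<subseteq> {..<m}" and cnt: "\<forall>j'<m. card {i. i < n \<and> j' \<in> S i} \<le> ones j'"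
    have "\<forall>j'<m. card {i. i < n \<and> j' \<in> S i} \<le> ones_plus j j'"
    proof (intro allI impI)
      fix j' assume "j' < m"
      then have "card {i. i < n \<and> j' \<in> S i} \<le> 1" using cnt by (simp add: ones_def)
      then show "card {i. i < n \<and> j' \<in> S i} \<le> ones_plus j j'" unfolding ones_plus_def by (cases "j' = j") simp_all
    qed
    then show "(\<Sum>i<n. b i (S i)) \<le> W m n b (ones_plus j)" by (rule W_ge[OF S])
  qed
  then show ?thesis unfolding item_price_def by simp
qed

lemma part_count: "is_partition m n x \<Longrightarrow> card {i. i < n \<and> j \<in> x i} \<le> 1"
proof -
  assume p: "is_partition m n x"
  have f: "finite {i. i < n \<and> j \<in> x i}" by auto
  have "a = c" if "a \<in> {i. i < n \<and> j \<in> x i}" "c \<in> {i. i < n \<and> j \<in> x i}" for a c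
  proof (rule ccontr)
    assume "a \<noteq> c"
    then have "x a \<inter> x c = {}" using p that unfolding is_partition_def by blast
    then show False using that by blast
  qed
  then show ?thesis using card_le_Suc0_iff_eq[OF f] by simp
qed

lemma add_demand_suff:
  fixes w q :: "nat \<Rightarrow> real"
  assumes Y: "Y \<subseteq> {..<m}" and pos: "\<And>j. j < m \<Longrightarrow> w j > q j \<Longrightarrow> j \<in> Y"
    and nn: "\<And>j. j \<in> Y \<Longrightarrow> w j \<ge> q j"
    and Z: "Z \<subseteq> {..<m}"
  shows "(\<Sum>j\<in>Z. w j - q j) \<le> (\<Sum>j\<in>Y. w j - q j)"
proof -
  have fZ: "finite Z" and fY: "finite Y" using Y Z finite_subset by blast+
  have a: "(\<Sum>j\<in>Z. w j - q j) = (\<Sum>j\<in>Z \<inter> Y. w j - q j) + (\<Sum>j\<in>Z - Y. w j - q j)"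
    by (rule sum.Int_Diff[OF fZ])
  have b: "(\<Sum>j\<in>Y. w j - q j) = (\<Sum>j\<in>Z \<inter> Y. w j - q j) + (\<Sum>j\<in>Y - Z. w j - q j)"
    using sum.Int_Diff[OF fY, of "\<lambda>j. w j - q j" Z] by (simp add: Int_commute)
  have c: "(\<Sum>j\<in>Z - Y. w j - q j) \<le> 0"
  proof (rule sum_nonpos)
    fix j assume "j \<in> Z - Y"
    then show "w j - q j \<le> 0" using Z pos by force
  qed
  have d: "(\<Sum>j\<in>Y - Z. w j - q j) \<ge> 0"
    by (rule sum_nonneg) (use nn in force)
  show ?thesis using a b c d by linarith
qed

lemma additive_gs:
  fixes H :: real
  assumes A: "A \<subseteq> {..<m}" and H: "H \<ge> 0"
  shows "gross_substitutes m (\<lambda>S. H * real (card (S \<inter> A)))"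
proof -
  define w where "w j = (if j \<in> A then H else 0)" for j
  have val: "H * real (card (S \<inter> A)) = (\<Sum>j\<in>S. w j)" if "finite S" for S
    using sum.inter_restrict[OF \<open>finite S\<close>, of "\<lambda>_. H" A] by (simp add: w_def mult.commute)
  have dem: "X \<in> demand m (\<lambda>S. H * real (card (S \<inter> A))) p \<longleftrightarrow> X \<subseteq> {..<m} \<and>
      (\<forall>Y. Y \<subseteq> {..<m} \<longrightarrow> (\<Sum>j\<in>Y. w j - p j) \<le> (\<Sum>j\<in>X. w j - p j))" for X p
  proof -
    have e: "H * real (card (S \<inter> A)) - (\<Sum>j\<in>S. p j) = (\<Sum>j\<in>S. w j - p j)" if "S \<subseteq> {..<m}" for S
    proof -
      have "finite S" using that finite_subset by blast
      then show ?thesis using val[of S] by (simp add: sum_subtractf)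
    qed
    show ?thesis
    proof (cases "X \<subseteq> {..<m}")
      case True
      then show ?thesis unfolding demand_def mem_Collect_eq by (simp add: e)
    next
      case False
      then show ?thesis unfolding demand_def by simp
    qed
  qed
  have isv: "is_valuation m (\<lambda>S. H * real (card (S \<inter> A)))"
    unfolding is_valuation_def
  proof (intro conjI allI impI)
    fix S T :: "nat set" assume "S \<subseteq> T \<and> T \<subseteq> {..<m}"
    then have "card (S \<inter> A) \<le> card (T \<inter> A)"
      by (meson Int_mono card_mono finite_Int finite_lessThan finite_subset order_refl)
    then show "H * real (card (S \<inter> A)) \<le> H * real (card (T \<inter> A))"
      using H by (simp add: mult_left_mono)
  qed (use H in auto)
  show ?thesis unfolding gross_substitutes_def
  proof (intro conjI isv allI impI ballI)
    fix p q :: "nat \<Rightarrow> real" and X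
    assume le: "\<forall>j<m. p j \<le> q j" and X: "X \<in> demand m (\<lambda>S. H * real (card (S \<inter> A))) p"
    define Y where "Y = {j. j < m \<and> w j > q j} \<union> {j\<in>X. w j \<ge> q j}"
    have Xd: "X \<subseteq> {..<m} \<and> (\<forall>Y. Y \<subseteq> {..<m} \<longrightarrow> (\<Sum>j\<in>Y. w j - p j) \<le> (\<Sum>j\<in>X. w j - p j))"
      using X dem[of X p] by simp
    then have Xs: "X \<subseteq> {..<m}" by simp
    have Ys: "Y \<subseteq> {..<m}" using Xs by (auto simp: Y_def)
    have "Y \<in> demand m (\<lambda>S. H * real (card (S \<inter> A))) q"
      unfolding dem[of Y q]
    proof (intro conjI Ys allI impI)
      fix Z assume Z: "Z \<subseteq> {..<m}"
      show "(\<Sum>j\<in>Z. w j - q j) \<le> (\<Sum>j\<in>Y. w j - q j)"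
        by (rule add_demand_suff[OF Ys _ _ Z]) (auto simp: Y_def)
    qed
    moreover have "\<forall>j<m. p j = q j \<and> j \<in> X \<longrightarrow> j \<in> Y"
    proof (intro allI impI)
      fix j assume j: "j < m" "p j = q j \<and> j \<in> X"
      have fX: "finite X" using Xs finite_subset by blast
      have "X - {j} \<subseteq> {..<m}" using Xs by blast
      then have "(\<Sum>i\<in>X - {j}. w i - p i) \<le> (\<Sum>i\<in>X. w i - p i)" using Xd by blast
      moreover have "(\<Sum>i\<in>X. w i - p i) = (w j - p j) + (\<Sum>i\<in>X - {j}. w i - p i)"
        using j by (intro sum.remove[OF fX]) blast
      ultimately have "w j \<ge> q j" using j by simp
      then show "j \<in> Y" using j by (simp add: Y_def)
    qed
    ultimately show "\<exists>Y\<in>demand m (\<lambda>S. H * real (card (S \<inter> A))) q. \<forall>j<m. p j = q j \<and> j \<in> X \<longrightarrow> j \<in> Y"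
      by blast
  qed
qed


lemma W_ones_le:
  fixes c :: profile
  assumes n: "0 < n" and cv: "\<forall>k<n. is_valuation m (c k)" and opt: "optimal_allocation m n c x"
  shows "W m n c ones \<le> welfare n c x"
proof (rule W_le)
  fix S :: "nat \<Rightarrow> nat set"
  assume S: "\<forall>i<n. S i \<subseteq> {..<m}" and cnt: "\<forall>j<m. card {i. i < n \<and> j \<in> S i} \<le> ones j"
  have dis: "S i \<inter> S k = {}" if "i < n" "k < n" "i \<noteq> k" for i k
  proof (rule ccontr)
    assume "S i \<inter> S k \<noteq> {}"
    then obtain j where j: "j \<in> S i" "j \<in> S k" by blast
    then have jm: "j < m" using S that by blast
    have f: "finite {i. i < n \<and> j \<in> S i}" by auto
    have "{i, k} \<subseteq> {i. i < n \<and> j \<in> S i}" using j that by auto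
    then have "card {i, k} \<le> card {i. i < n \<and> j \<in> S i}" by (rule card_mono[OF f])
    also have "\<dots> \<le> 1" using cnt jm by (simp add: ones_def)
    finally show False using that by simp
  qed
  define S' where "S' = S(0 := S 0 \<union> ({..<m} - (\<Union>i<n. S i)))"
  define R where "R = {..<m} - (\<Union>i<n. S i)"
  have S'_eq: "S' i = (if i = 0 then S 0 \<union> R else S i)" for i by (simp add: S'_def R_def)
  have SU: "S k \<subseteq> (\<Union>i<n. S i)" if "k < n" for k using that by blast
  have part: "is_partition m n S'"
    unfolding is_partition_def
  proof (intro conjI allI impI)
    fix i assume "i < n" then show "S' i \<subseteq> {..<m}" using S by (auto simp: S'_def)
  next
    fix i k assume ik: "i < n" "k < n" "i \<noteq> k"
    show "S' i \<inter> S' k = {}"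
    proof (cases "i = 0")
      case True
      then have "k \<noteq> 0" using ik by simp
      have "S 0 \<inter> S k = {}" using dis[of 0 k] ik \<open>k \<noteq> 0\<close> by simp
      moreover have "R \<inter> S k = {}" using SU[of k] ik by (auto simp: R_def)
      ultimately show ?thesis using True \<open>k \<noteq> 0\<close> by (simp add: S'_eq Int_Un_distrib2)
    next
      case False
      show ?thesis
      proof (cases "k = 0")
        case True
        have "S i \<inter> S 0 = {}" using dis[of i 0] ik True False by simp
        moreover have "S i \<inter> R = {}" using SU[of i] ik by (auto simp: R_def)
        ultimately show ?thesis using True \<open>i \<noteq> 0\<close> by (simp add: S'_eq Int_Un_distrib)
      next
        case False
        then show ?thesis using dis[of i k] ik \<open>i \<noteq> 0\<close> by (simp add: S'_eq)
      qed
    qed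
  next
    show "(\<Union>i<n. S' i) = {..<m}"
    proof
      show "(\<Union>i<n. S' i) \<subseteq> {..<m}" using S by (auto simp: S'_def)
    next
      show "{..<m} \<subseteq> (\<Union>i<n. S' i)"
      proof
        fix j assume j: "j \<in> {..<m}"
        show "j \<in> (\<Union>i<n. S' i)"
        proof (cases "\<exists>i<n. j \<in> S i")
          case True
          then obtain i where i: "i < n" "j \<in> S i" by blast
          then have "j \<in> S' i" by (cases "i = 0") (auto simp: S'_def)
          then show ?thesis using i by blast
        next
          case False
          then have "j \<in> S' 0" using j by (auto simp: S'_def)
          then show ?thesis using n by blast
        qed
      qed
    qed
  qed
  have "(\<Sum>i<n. c i (S i)) \<le> (\<Sum>i<n. c i (S' i))"
  proof (rule sum_mono)
    fix i assume i: "i \<in> {..<n}"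
    have "S i \<subseteq> S' i" by (auto simp: S'_def)
    moreover have "S' i \<subseteq> {..<m}" using part i by (simp add: is_partition_def)
    ultimately show "c i (S i) \<le> c i (S' i)" using cv i by (simp add: is_valuation_def)
  qed
  also have "\<dots> \<le> welfare n c x" using opt part by (simp add: optimal_allocation_def welfare_def)
  finally show "(\<Sum>i<n. c i (S i)) \<le> welfare n c x" .
qed


theorem corollary1:
  fixes m n :: nat and alloc :: "profile \<Rightarrow> allocation" and v :: profile
  assumes alloc_opt: "\<And>b. (\<forall>i<n. gross_substitutes m (b i)) \<Longrightarrow> optimal_allocation m n b (alloc b)"
    and v_gs: "\<forall>i<n. gross_substitutes m (v i)"
  shows "\<exists>b. is_nash_gs m n alloc v b \<and> welfare n v (alloc b) = opt_welfare m n v"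
proof -
  define b0 :: profile where "b0 = (\<lambda>_ S. 0 * real (card (S \<inter> {})))"
  have b0gs: "\<forall>i<n. gross_substitutes m (b0 i)"
    unfolding b0_def by (intro allI impI additive_gs) auto
  have p0: "is_partition m n (alloc b0)" using alloc_opt[OF b0gs] unfolding optimal_allocation_def by blast
  let ?WS = "{welfare n v y | y. is_partition m n y}"
  have WSeq: "?WS = {(\<Sum>i<n. v i (y i)) | y. (\<forall>i<n. y i \<subseteq> {..<m}) \<and> is_partition m n y}"
    by (auto simp: is_partition_def welfare_def)
  have finWS: "finite ?WS" unfolding WSeq
    by (rule fin_img[where f="\<lambda>S. \<Sum>i<n. v i (S i)" and P = "is_partition m n"]) (rule sum.cong, auto)
  have neWS: "?WS \<noteq> {}" using p0 by blast
  obtain xs where xsp: "is_partition m n xs" and xsw: "welfare n v xs = opt_welfare m n v"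
    using Max_in[OF finWS neWS] unfolding opt_welfare_def by auto
  have xs_sub: "\<forall>i<n. xs i \<subseteq> {..<m}" and xs_dis: "\<forall>i<n. \<forall>k<n. i \<noteq> k \<longrightarrow> xs i \<inter> xs k = {}"
    and xs_un: "(\<Union>i<n. xs i) = {..<m}" using xsp unfolding is_partition_def by blast+
  have xs_fin: "finite (xs i)" if "i < n" for i using xs_sub that finite_subset by blast
  define H where "H = 1 + (\<Sum>i<n. v i {..<m})"
  have vval: "\<forall>i<n. is_valuation m (v i)" using v_gs unfolding gross_substitutes_def by blast
  have vnn: "0 \<le> v i T" if "i < n" "T \<subseteq> {..<m}" for i T
    using vval that unfolding is_valuation_def by blast
  have vmono: "v i S \<le> v i T" if "i < n" "S \<subseteq> T" "T \<subseteq> {..<m}" for i S T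
    using vval that unfolding is_valuation_def by blast
  have vH: "v i T < H" if "i < n" "T \<subseteq> {..<m}" for i T
  proof -
    have "v i T \<le> v i {..<m}" using vmono that by blast
    also have "\<dots> \<le> (\<Sum>i<n. v i {..<m})"
      by (rule member_le_sum) (use that vnn in auto)
    finally show ?thesis unfolding H_def by simp
  qed
  have Hpos: "H > 0"
  proof -
    have "0 \<le> (\<Sum>i<n. v i {..<m})" by (rule sum_nonneg) (use vnn in auto)
    then show ?thesis unfolding H_def by simp
  qed
  define b :: profile where "b = (\<lambda>k S. H * real (card (S \<inter> xs k)))"
  have bgs: "\<forall>k<n. gross_substitutes m (b k)"
    unfolding b_def by (intro allI impI additive_gs) (use xs_sub Hpos in auto)
  have cardxs: "(\<Sum>i<n. card (xs i)) = m"
  proof -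
    have "card (\<Union>i\<in>{..<n}. xs i) = (\<Sum>i<n. card (xs i))"
      by (rule card_UN_disjoint) (use xs_fin xs_dis in auto)
    then show ?thesis using xs_un by simp
  qed
  have cardxs_r: "(\<Sum>i<n. real (card (xs i))) = real m" using cardxs by (metis of_nat_sum)
  have welb_xs: "welfare n b xs = H * real m"
  proof -
    have "welfare n b xs = (\<Sum>i<n. H * real (card (xs i)))" by (simp add: welfare_def b_def)
    also have "\<dots> = H * real m" using cardxs_r by (simp add: sum_distrib_left[symmetric])
    finally show ?thesis .
  qed
  have allocb: "\<forall>i<n. alloc b i = xs i"
  proof -
    define x where "x = alloc b"
    have opt: "optimal_allocation m n b x" using alloc_opt[OF bgs] x_def by simp
    then have xp: "is_partition m n x" by (simp add: optimal_allocation_def)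
    have x_sub: "\<forall>i<n. x i \<subseteq> {..<m}" and x_dis: "\<forall>i<n. \<forall>k<n. i \<noteq> k \<longrightarrow> x i \<inter> x k = {}"
      using xp unfolding is_partition_def by blast+
    have ge: "H * real m \<le> welfare n b x" using opt xsp welb_xs unfolding optimal_allocation_def by metis
    let ?U = "\<Union>i\<in>{..<n}. x i \<inter> xs i"
    have cU0: "card ?U = (\<Sum>i<n. card (x i \<inter> xs i))"
      by (rule card_UN_disjoint) (use xs_fin x_dis in auto)
    then have cU: "real (card ?U) = (\<Sum>i<n. real (card (x i \<inter> xs i)))" by (metis of_nat_sum)
    have "welfare n b x = (\<Sum>i<n. H * real (card (x i \<inter> xs i)))" by (simp add: welfare_def b_def)
    also have "\<dots> = H * real (card ?U)" using cU by (simp add: sum_distrib_left[symmetric])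
    finally have "H * real m \<le> H * real (card ?U)" using ge by simp
    then have "m \<le> card ?U" using Hpos by simp
    moreover have Usub: "?U \<subseteq> {..<m}" using x_sub by auto
    ultimately have Ueq: "?U = {..<m}" using card_seteq[of "{..<m}" ?U] by simp
    show ?thesis
    proof (intro allI impI)
      fix i assume i: "i < n"
      show "alloc b i = xs i" unfolding x_def[symmetric]
      proof
        show "x i \<subseteq> xs i"
        proof
          fix j assume j: "j \<in> x i"
          then have "j \<in> ?U" using Ueq x_sub i by auto
          then obtain k where k: "k < n" "j \<in> x k" "j \<in> xs k" by auto
          then have "k = i" using x_dis i j by blast
          then show "j \<in> xs i" using k by simp
        qed
      next
        show "xs i \<subseteq> x i"
        proof
          fix j assume j: "j \<in> xs i"
          then have "j \<in> ?U" using Ueq xs_sub i by auto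
          then obtain k where k: "k < n" "j \<in> x k" "j \<in> xs k" by auto
          then have "k = i" using xs_dis i j by blast
          then show "j \<in> x i" using k by simp
        qed
      qed
    qed
  qed
  have pb: "item_price m n b j \<le> 0" for j
  proof -
    have "W m n b (ones_plus j) \<le> H * real m"
    proof (rule W_le)
      fix S :: "nat \<Rightarrow> nat set" assume S: "\<forall>i<n. S i \<subseteq> {..<m}"
      have "(\<Sum>i<n. b i (S i)) \<le> (\<Sum>i<n. H * real (card (xs i)))"
      proof (rule sum_mono)
        fix i assume i: "i \<in> {..<n}"
        have "card (S i \<inter> xs i) \<le> card (xs i)" using xs_fin i by (simp add: card_mono)
        then show "b i (S i) \<le> H * real (card (xs i))" using Hpos by (simp add: b_def)
      qed
      also have "\<dots> = H * real m" using cardxs_r by (simp add: sum_distrib_left[symmetric])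
      finally show "(\<Sum>i<n. b i (S i)) \<le> H * real m" .
    qed
    moreover have "H * real m \<le> W m n b ones"
    proof -
      have "(\<Sum>i<n. b i (xs i)) \<le> W m n b ones"
        by (rule W_ge) (use xs_sub part_count[OF xsp] in \<open>auto simp: ones_def\<close>)
      then show ?thesis using welb_xs by (simp add: welfare_def)
    qed
    ultimately show ?thesis unfolding item_price_def by simp
  qed
  have nash: "is_nash_gs m n alloc v b"
    unfolding is_nash_gs_def
  proof (intro conjI bgs allI impI)
    fix i b' assume i: "i < n" and b'gs: "gross_substitutes m b'"
    define c where "c = b(i := b')"
    have cgs: "\<forall>k<n. gross_substitutes m (c k)" using bgs b'gs by (simp add: c_def)
    define x where "x = alloc c"
    have opt: "optimal_allocation m n c x" using alloc_opt[OF cgs] x_def by simp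
    then have xp: "is_partition m n x" by (simp add: optimal_allocation_def)
    have x_sub: "\<forall>i<n. x i \<subseteq> {..<m}" and x_dis: "\<forall>i<n. \<forall>k<n. i \<noteq> k \<longrightarrow> x i \<inter> x k = {}"
      using xp unfolding is_partition_def by blast+
    have fT: "finite (x i)" using x_sub i finite_subset by blast
    have Ub: "v i (xs i) \<le> utility m n alloc (v i) b i"
    proof -
      have "payment m n alloc b i \<le> 0" unfolding payment_def by (rule sum_nonpos) (use pb in auto)
      then show ?thesis unfolding utility_def using allocb i by simp
    qed
    have payc: "0 \<le> payment m n alloc c i" unfolding payment_def
      by (rule sum_nonneg) (use price_nonneg in auto)
    show "utility m n alloc (v i) (b(i := b')) i \<le> utility m n alloc (v i) b i"
    proof (cases "x i \<subseteq> xs i")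
      case True
      have "utility m n alloc (v i) c i \<le> v i (x i)" using payc by (simp add: utility_def x_def)
      also have "\<dots> \<le> v i (xs i)" using vmono[OF i True] xs_sub i by blast
      finally show ?thesis using Ub c_def by simp
    next
      case False
      then obtain j where j: "j \<in> x i" "j \<notin> xs i" by blast
      then have jm: "j < m" using x_sub i by blast
      then obtain k where k: "k < n" "j \<in> xs k" using xs_un by auto
      have ki: "k \<noteq> i" using k j by auto
      have jxk: "j \<notin> x k" using x_dis i k ki j by blast
      have cv: "\<forall>k<n. is_valuation m (c k)" using cgs unfolding gross_substitutes_def by blast
      have W1: "W m n c ones \<le> welfare n c x" by (rule W_ones_le) (use i cv opt in auto)
      define S' where "S' = x(k := insert j (x k))"
      have W2: "(\<Sum>l<n. c l (S' l)) \<le> W m n c (ones_plus j)"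
      proof (rule W_ge)
        show "\<forall>l<n. S' l \<subseteq> {..<m}" using x_sub jm by (auto simp: S'_def)
        show "\<forall>j'<m. card {l. l < n \<and> j' \<in> S' l} \<le> ones_plus j j'"
        proof (intro allI impI)
          fix j' assume j': "j' < m"
          show "card {l. l < n \<and> j' \<in> S' l} \<le> ones_plus j j'"
          proof (cases "j' = j")
            case True
            have "{l. l < n \<and> j' \<in> S' l} \<subseteq> {i, k}"
            proof
              fix l assume l: "l \<in> {l. l < n \<and> j' \<in> S' l}"
              show "l \<in> {i, k}"
              proof (cases "l = k")
                case False
                then have "j \<in> x l" "l < n" using l True by (auto simp: S'_def)
                then have "l = i" using x_dis i j by blast
                then show ?thesis by simp
              qed simp
            qed
            then have "card {l. l < n \<and> j' \<in> S' l} \<le> card {i, k}" by (simp add: card_mono)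
            also have "\<dots> \<le> 2" by (simp add: card_insert_if)
            finally show ?thesis using True by (simp add: ones_plus_def)
          next
            case False
            have "{l. l < n \<and> j' \<in> S' l} = {l. l < n \<and> j' \<in> x l}" using False by (auto simp: S'_def)
            then show ?thesis using part_count[OF xp, of j'] False by (simp add: ones_plus_def)
          qed
        qed
      qed
      have ck: "c l (S' l) = c l (x l) + (if l = k then H else 0)" if "l < n" for l
      proof (cases "l = k")
        case True
        have fin: "finite (x k \<inter> xs k)" using xs_fin k by simp
        have "insert j (x k) \<inter> xs k = insert j (x k \<inter> xs k)" using k by auto
        then have "card (insert j (x k) \<inter> xs k) = Suc (card (x k \<inter> xs k))" using fin jxk by simp
        then show ?thesis using True ki by (simp add: c_def S'_def b_def algebra_simps)
      next
        case False
        then show ?thesis by (simp add: S'_def)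
      qed
      have "(\<Sum>l<n. c l (S' l)) = (\<Sum>l<n. c l (x l)) + (\<Sum>l<n. (if l = k then H else 0))"
        using ck by (simp add: sum.distrib)
      also have "\<dots> = welfare n c x + H" using k by (simp add: welfare_def)
      finally have "welfare n c x + H \<le> W m n c (ones_plus j)" using W2 by simp
      then have pj: "H \<le> item_price m n c j" using W1 unfolding item_price_def by simp
      have "payment m n alloc c i = item_price m n c j + (\<Sum>j'\<in>x i - {j}. item_price m n c j')"
        unfolding payment_def x_def[symmetric] using sum.remove[OF fT j(1)] by simp
      moreover have "0 \<le> (\<Sum>j'\<in>x i - {j}. item_price m n c j')" by (rule sum_nonneg) (use price_nonneg in auto)
      ultimately have "H \<le> payment m n alloc c i" using pj by simp
      then have "utility m n alloc (v i) c i \<le> v i (x i) - H" by (simp add: utility_def x_def)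
      also have "\<dots> < 0" using vH[OF i] x_sub i by simp
      also have "0 \<le> v i (xs i)" using vnn[OF i] xs_sub i by simp
      finally show ?thesis using Ub c_def by simp
    qed
  qed
  have "welfare n v (alloc b) = welfare n v xs" unfolding welfare_def using allocb by simp
  then show ?thesis using nash xsw by auto
qed

end
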